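(* Let $h$ be a positive integer and $m=100h-1$. Write $(x_0X)^m=\sum_{i=0}^{m}a_iX^i$ in $A[X;D]$, where $a_i\in A(100h-1)$. Then there is an index $i>\frac34(m+1)$ such that $a_i\notin B_1$ and $a_j\in B_1$ for all $j>i$.
   Context: Let $K$ be a field and $A$ the free associative (non-unital) $K$-algebra on free generators $x_0,x_1,x_2,\dots$, with $K$-basis of monomials; $A^1$ is $A$ with unity adjoined. For $n\ge1$, $A(n)$ is the $K$-span of monomials of length $n$, and $A(0)=K$. For a monomial $s=x_{i_1}\cdots x_{i_n}$ write $s[q]=x_{i_q}$. Let $D$ be the derivation of $A$ with $D(x_i)=x_{i+1}$, and $A[X;D]$ the differential polynomial ring ($Xa=aX+D(a)$). $Z_1$ is the set of elements $a\in A$ of one of the forms: (1) $a=\kappa s$, $\kappa\in K$, $s$ a monomial of length $99$ with $s[3^p]=s[3^q]$ for some $0\le p<q\le 1$ (i.e. $s[1]=s[3]$); (2) $a=\kappa(s_1+s_2)$, $\kappa\in K$, $s_1,s_2$ monomials of length $99$, with integers $l_1>l_2\ge0$ such that $s_1[1]=x_{l_1}$, $s_1[3]=x_{l_2}$, $s_2[1]=x_{l_2}$, $s_2[3]=x_{l_1}$, and $s_1,s_2$ agree at all other positions. $B_1=\sum_{m\ge0}A(100m)\,Z_1\,A^1$ (the $K$-span of products $uzv$ with $u\in A(100m)$, $m\ge0$, $z\in Z_1$, $v\in A^1$). *)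

theory Defs
  imports Main "HOL-Library.Poly_Mapping"
begin

text \<open>Elements of the free associative algebra with unity A^1 over the field 'k on generators
x_0, x_1, ...: finitely supported K-linear combinations of words (monomials);
the word [i1,...,in] stands for x_i1 ... x_in, the empty word for the unit.\<close>
type_synonym 'k fa = "nat list \<Rightarrow>\<^sub>0 'k"

definition fa_mon :: "nat list \<Rightarrow> ('k::field) fa" where
  "fa_mon s = Poly_Mapping.single s 1"

definition fa_smult :: "'k::field \<Rightarrow> 'k fa \<Rightarrow> 'k fa" where
  "fa_smult c p = Poly_Mapping.map (\<lambda>v. c * v) p"

definition fa_mult :: "('k::field) fa \<Rightarrow> 'k fa \<Rightarrow> 'k fa" where
  "fa_mult p q = (\<Sum>s\<in>Poly_Mapping.keys p. \<Sum>t\<in>Poly_Mapping.keys q.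
      Poly_Mapping.single (s @ t) (Poly_Mapping.lookup p s * Poly_Mapping.lookup q t))"

definition fa_A :: "('k::field) fa set" where
  "fa_A = {p. [] \<notin> Poly_Mapping.keys p}"

definition fa_A1 :: "('k::field) fa set" where
  "fa_A1 = UNIV"

definition fa_hom :: "nat \<Rightarrow> ('k::field) fa set" where
  "fa_hom n = {p. \<forall>s\<in>Poly_Mapping.keys p. length s = n}"

text \<open>The derivation D with D(x_i) = x_(i+1), extended by Leibniz rule and linearity:
D(x_i1...x_in) = sum over positions q of the word with the q-th letter index raised by 1.\<close>
definition fa_D :: "('k::field) fa \<Rightarrow> 'k fa" where
  "fa_D p = (\<Sum>s\<in>Poly_Mapping.keys p. fa_smult (Poly_Mapping.lookup p s)
      (\<Sum>q<length s. fa_mon (s[q := Suc (s ! q)])))"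

text \<open>Differential polynomial ring A[X;D]: elements are finitely supported maps
i \<mapsto> coefficient of X^i (coefficients written on the left), with multiplication determined by
X^i b = sum_k (i choose k) D^k(b) X^(i-k), i.e. (a X^i)(b X^j) = sum_k (i choose k) a D^k(b) X^(i+j-k).\<close>
type_synonym 'k dpoly = "nat \<Rightarrow>\<^sub>0 'k fa"

definition dp_mult :: "('k::field) dpoly \<Rightarrow> 'k dpoly \<Rightarrow> 'k dpoly" where
  "dp_mult P Q = (\<Sum>i\<in>Poly_Mapping.keys P. \<Sum>j\<in>Poly_Mapping.keys Q. \<Sum>k\<in>{..i}.
      Poly_Mapping.single (i + j - k)
        (fa_smult (of_nat (i choose k)) (fa_mult (Poly_Mapping.lookup P i) ((fa_D ^^ k) (Poly_Mapping.lookup Q j)))))"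

definition x0X :: "('k::field) dpoly" where
  "x0X = Poly_Mapping.single 1 (fa_mon [0])"

definition x0X_pow :: "nat \<Rightarrow> ('k::field) dpoly" where
  "x0X_pow m = ((dp_mult x0X) ^^ (m - 1)) x0X"

definition x0X_coeff :: "nat \<Rightarrow> nat \<Rightarrow> ('k::field) fa" where
  "x0X_coeff m i = Poly_Mapping.lookup (x0X_pow m) i"

inductive_set fa_span :: "('k::field) fa set \<Rightarrow> 'k fa set" for S where
  span_zero: "0 \<in> fa_span S"
| span_base: "a \<in> S \<Longrightarrow> a \<in> fa_span S"
| span_add: "a \<in> fa_span S \<Longrightarrow> b \<in> fa_span S \<Longrightarrow> a + b \<in> fa_span S"
| span_smult: "a \<in> fa_span S \<Longrightarrow> fa_smult c a \<in> fa_span S"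

text \<open>Z_1. Positions s[q] are 1-based in the paper, s ! (q-1) here; the condition
s[3^p] = s[3^q] for 0 \<le> p < q \<le> 1 is s[1] = s[3], i.e. s!0 = s!2.\<close>
definition Z1 :: "('k::field) fa set" where
  "Z1 = {fa_smult \<kappa> (fa_mon s) | \<kappa> s. length s = 99 \<and>
            (\<exists>p q::nat. p < q \<and> q \<le> 1 \<and> s ! (3^p - 1) = s ! (3^q - 1))}
      \<union> {fa_smult \<kappa> (fa_mon s1 + fa_mon s2) | \<kappa> s1 s2. length s1 = 99 \<and> length s2 = 99 \<and>
            (\<exists>l1 l2::nat. l1 > l2 \<and> s1 ! 0 = l1 \<and> s1 ! 2 = l2 \<and> s2 ! 0 = l2 \<and> s2 ! 2 = l1 \<and>
               (\<forall>q<99. q \<noteq> 0 \<and> q \<noteq> 2 \<longrightarrow> s1 ! q = s2 ! q))}"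

definition B1 :: "('k::field) fa set" where
  "B1 = fa_span {fa_mult (fa_mult u z) v | u z v m. u \<in> fa_hom (100 * m) \<and> z \<in> Z1 \<and> v \<in> fa_A1}"

end

theory Submission
  imports Defs
begin


definition Phi :: "(nat list \<Rightarrow> 'k) \<Rightarrow> 'k fa \<Rightarrow> 'k::field" where
  "Phi f p = (\<Sum>s\<in>Poly_Mapping.keys p. Poly_Mapping.lookup p s * f s)"

lemma Phi_superset:
  assumes "finite S" "Poly_Mapping.keys p \<subseteq> S"
  shows "Phi f p = (\<Sum>s\<in>S. Poly_Mapping.lookup p s * f s)"
  unfolding Phi_def
  by (rule sum.mono_neutral_left) (use assms in \<open>auto simp: in_keys_iff\<close>)

lemma Phi_zero[simp]: "Phi f 0 = 0"
  by (simp add: Phi_def)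

lemma Phi_add: "Phi f (p + q) = Phi f p + Phi f q"
proof -
  let ?S = "Poly_Mapping.keys p \<union> Poly_Mapping.keys q"
  have "Phi f (p + q) = (\<Sum>s\<in>?S. Poly_Mapping.lookup (p+q) s * f s)"
    by (rule Phi_superset) (auto simp: keys_add)
  also have "\<dots> = (\<Sum>s\<in>?S. Poly_Mapping.lookup p s * f s) + (\<Sum>s\<in>?S. Poly_Mapping.lookup q s * f s)"
    by (simp add: lookup_add distrib_right sum.distrib)
  also have "\<dots> = Phi f p + Phi f q"
    using Phi_superset[of ?S p f] Phi_superset[of ?S q f] by simp
  finally show ?thesis .
qed

lemma lookup_smult: "Poly_Mapping.lookup (fa_smult c p) s = c * Poly_Mapping.lookup p s"
  by (simp add: fa_smult_def Poly_Mapping.map.rep_eq when_def)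

lemma keys_smult: "Poly_Mapping.keys (fa_smult c p) \<subseteq> Poly_Mapping.keys p"
  by (auto simp: in_keys_iff lookup_smult)

lemma Phi_smult: "Phi f (fa_smult c p) = c * Phi f p"
proof -
  have "Phi f (fa_smult c p) = (\<Sum>s\<in>Poly_Mapping.keys p. Poly_Mapping.lookup (fa_smult c p) s * f s)"
    by (rule Phi_superset) (auto simp: keys_smult)
  thus ?thesis by (simp add: lookup_smult Phi_def sum_distrib_left mult.assoc)
qed

lemma Phi_single: "Phi f (Poly_Mapping.single x c) = c * f x"
  by (simp add: Phi_def)

lemma Phi_mon: "Phi f (fa_mon s) = f s"
  by (simp add: fa_mon_def Phi_single)

lemma Phi_sum: "Phi f (sum g A) = (\<Sum>a\<in>A. Phi f (g a))"
  by (induction A rule: infinite_finite_induct) (auto simp: Phi_add)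

lemma Phi_fun_add: "Phi (\<lambda>s. f s + g s) p = Phi f p + Phi g p"
  by (simp add: Phi_def distrib_left sum.distrib)

lemma Phi_mult: "Phi f (fa_mult p q) = Phi (\<lambda>s. Phi (\<lambda>t. f (s @ t)) q) p"
  unfolding fa_mult_def Phi_sum Phi_single by (simp add: Phi_def sum_distrib_left mult.assoc)

lemma Phi_vanish: "(\<And>s. s \<in> Poly_Mapping.keys p \<Longrightarrow> f s = 0) \<Longrightarrow> Phi f p = 0"
  by (simp add: Phi_def)


fun Gc :: "nat \<Rightarrow> nat list \<Rightarrow> nat" where
  "Gc c [] = 1"
| "Gc c (x#w) = (c choose x) * Gc (c + 1 - x) w"

definition dec :: "nat list \<Rightarrow> nat \<Rightarrow> nat list" where
  "dec v q = v[q := v!q - 1]"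

definition DS :: "nat \<Rightarrow> nat list \<Rightarrow> nat" where
  "DS c v = (\<Sum>q<length v. if 0 < v!q then Gc c (dec v q) else 0)"

lemma dec_Cons0: "dec (x#w) 0 = (x-1)#w" by (simp add: dec_def)
lemma dec_CosSuc: "dec (x#w) (Suc q) = x # dec w q" by (simp add: dec_def)

lemma DS_Cons: "DS c (x#w) = (if 0 < x then Gc c ((x-1)#w) else 0) + (c choose x) * DS (c + 1 - x) w"
proof -
  have "DS c (x#w) = (if 0 < (x#w)!0 then Gc c (dec (x#w) 0) else 0) +
      (\<Sum>q<length w. if 0 < (x#w)!Suc q then Gc c (dec (x#w) (Suc q)) else 0)"
    unfolding DS_def length_Cons by (rule sum.lessThan_Suc_shift)
  also have "\<dots> = (if 0 < x then Gc c ((x-1)#w) else 0) +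
      (\<Sum>q<length w. if 0 < w!q then Gc c (x # dec w q) else 0)"
    by (simp only: nth_Cons_0 nth_Cons_Suc dec_Cons0 dec_CosSuc)
  also have "(\<Sum>q<length w. if 0 < w!q then Gc c (x # dec w q) else 0) = (c choose x) * DS (c + 1 - x) w"
    unfolding DS_def sum_distrib_left by (rule sum.cong) auto
  finally show ?thesis .
qed

lemma Gc_step: "Gc (Suc c) v = Gc c v + DS c v"
proof (induction v arbitrary: c)
  case Nil
  then show ?case by (simp add: DS_def)
next
  case (Cons x w)
  have IH: "Gc (Suc (c + 1 - x)) w = Gc (c + 1 - x) w + DS (c + 1 - x) w" using Cons by blast
  show ?case
  proof (cases "x \<le> c + 1")
    case True
    have e: "Suc (c + 1 - x) = c + 2 - x" using True by simp
    show ?thesis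
    proof (cases x)
      case 0
      then show ?thesis using IH e by (simp add: DS_Cons algebra_simps)
    next
      case (Suc y)
      have "Gc (Suc c) (x#w) = (Suc c choose x) * Gc (c + 2 - x) w" by simp
      also have "(Suc c choose x) = (c choose x) + (c choose y)" using Suc by simp
      also have "((c choose x) + (c choose y)) * Gc (c + 2 - x) w
          = (c choose x) * (Gc (c + 1 - x) w + DS (c + 1 - x) w) + (c choose y) * Gc (c + 1 - y) w"
        using IH e Suc by (simp add: algebra_simps)
      also have "\<dots> = Gc c (x#w) + DS c (x#w)" using Suc by (simp add: DS_Cons algebra_simps)
      finally show ?thesis .
    qed
  next
    case False
    then obtain y where y: "x = Suc y" "c < y" by (cases x) auto
    then show ?thesis by (simp add: DS_Cons binomial_eq_0)
  qed
qed

lemma Gc_nonzero: "Gc c v \<noteq> 0 \<Longrightarrow> v = [] \<or> sum_list v < c + length v"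
proof (induction v arbitrary: c)
  case Nil then show ?case by simp
next
  case (Cons x w)
  then have "x \<le> c" "Gc (c + 1 - x) w \<noteq> 0" by (auto simp: binomial_eq_0_iff)
  with Cons.IH[of "c + 1 - x"] show ?case by auto
qed

lemma prod_Cons_shift: "(\<Prod>q<length (x#w). f q) = f 0 * (\<Prod>q<length w. f (Suc q))" for f :: "nat \<Rightarrow> nat"
  by (simp only: length_Cons prod.lessThan_Suc_shift)

lemma Gc_prod: "Gc c w = (\<Prod>q<length w. (c + q - sum_list (take q w)) choose (w!q))"
proof (induction w arbitrary: c)
  case Nil then show ?case by simp
next
  case (Cons x w)
  show ?case
  proof (cases "x \<le> c + 1")
    case True
    have "Gc c (x#w) = (c choose x) * (\<Prod>q<length w. (c + 1 - x + q - sum_list (take q w)) choose (w!q))"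
      using Cons by simp
    also have "(\<Prod>q<length w. (c + 1 - x + q - sum_list (take q w)) choose (w!q))
       = (\<Prod>q<length w. (c + Suc q - sum_list (take (Suc q) (x#w))) choose ((x#w)!Suc q))"
      using True by (intro prod.cong) auto
    finally show ?thesis by (simp only: prod_Cons_shift) simp
  next
    case False
    then show ?thesis by (simp only: prod_Cons_shift) simp
  qed
qed


lemma fa_mult_zero_right[simp]: "fa_mult p 0 = 0"
  by (simp add: fa_mult_def)

lemma fa_D_zero[simp]: "fa_D 0 = 0"
  by (simp add: fa_D_def)

lemma lookup_smult': "Poly_Mapping.lookup (fa_smult c p) s = c * Poly_Mapping.lookup p s"
  by (simp add: fa_smult_def Poly_Mapping.map.rep_eq when_def)

lemma smult_one[simp]: "fa_smult 1 p = p"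
  by (rule poly_mapping_eqI) (simp add: lookup_smult')

lemma keys_delta:
  assumes "f 0 = 0"
  shows "(\<Sum>s\<in>Poly_Mapping.keys p. if s = a then f (Poly_Mapping.lookup p s) else 0) = f (Poly_Mapping.lookup p a)"
  using assms by (simp add: sum.delta in_keys_iff)

lemma upd_iff:
  assumes "q < length s" "length s = length w"
  shows "s[q := Suc (s!q)] = w \<longleftrightarrow> (0 < w!q \<and> s = dec w q)"
proof
  assume a: "s[q := Suc (s!q)] = w"
  then have w_eq: "w = s[q := Suc (s!q)]" by simp
  have "w!q = Suc (s!q)" unfolding w_eq using assms(1) by simp
  moreover have "dec w q = s" unfolding w_eq dec_def using assms(1) by simp
  ultimately show "0 < w!q \<and> s = dec w q" by simp
next
  assume a: "0 < w!q \<and> s = dec w q"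
  then have s_eq: "s = w[q := w!q - 1]" by (simp add: dec_def)
  have q: "q < length w" using assms by simp
  show "s[q := Suc (s!q)] = w" unfolding s_eq using q a by simp
qed

lemma lookup_D: "Poly_Mapping.lookup (fa_D p) w =
   (\<Sum>q<length w. if 0 < w!q then Poly_Mapping.lookup p (dec w q) else 0)"
proof -
  let ?K = "Poly_Mapping.keys p"
  let ?l = "Poly_Mapping.lookup p"
  have "Poly_Mapping.lookup (fa_D p) w = (\<Sum>s\<in>?K. \<Sum>q<length s. if s[q := Suc (s!q)] = w then ?l s else 0)"
    unfolding fa_D_def lookup_sum lookup_smult' fa_mon_def lookup_single
    by (intro sum.cong refl) (simp add: sum_distrib_left when_def cong: if_cong, intro sum.cong refl, simp)
  also have "\<dots> = (\<Sum>s\<in>?K. \<Sum>q<length w. if 0 < w!q \<and> s = dec w q then ?l s else 0)"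
  proof (rule sum.cong[OF refl])
    fix s
    show "(\<Sum>q<length s. if s[q := Suc (s!q)] = w then ?l s else 0) =
          (\<Sum>q<length w. if 0 < w!q \<and> s = dec w q then ?l s else 0)"
    proof (cases "length s = length w")
      case True
      show ?thesis
      proof (intro sum.cong)
        show "{..<length s} = {..<length w}" using True by simp
      next
        fix q assume "q \<in> {..<length w}"
        then have "q < length s" using True by simp
        then show "(if s[q := Suc (s!q)] = w then ?l s else 0) = (if 0 < w!q \<and> s = dec w q then ?l s else 0)"
          by (simp only: upd_iff[OF _ True])
      qed
    next
      case False
      have "\<And>q. s[q := Suc (s!q)] \<noteq> w" using False length_list_update by metis
      moreover have "\<And>q. s \<noteq> dec w q" unfolding dec_def using False length_list_update by metis
      ultimately show ?thesis by (simp only: if_False sum.neutral_const simp_thms)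
    qed
  qed
  also have "\<dots> = (\<Sum>q<length w. \<Sum>s\<in>?K. if 0 < w!q \<and> s = dec w q then ?l s else 0)"
    by (rule sum.swap)
  also have "\<dots> = (\<Sum>q<length w. if 0 < w!q then ?l (dec w q) else 0)"
  proof (intro sum.cong refl)
    fix q
    show "(\<Sum>s\<in>?K. if 0 < w!q \<and> s = dec w q then ?l s else 0) = (if 0 < w!q then ?l (dec w q) else 0)"
    proof (cases "0 < w!q")
      case True
      then show ?thesis using keys_delta[where f="\<lambda>x. x" and p=p and a="dec w q"] by (simp only: simp_thms if_True)
    next
      case False
      then show ?thesis by (simp only: simp_thms if_False sum.neutral_const)
    qed
  qed
  finally show ?thesis .
qed

lemma lookup_x0mult: "Poly_Mapping.lookup (fa_mult (fa_mon [0]) p) w =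
   (case w of [] \<Rightarrow> 0 | x#v \<Rightarrow> if x = 0 then Poly_Mapping.lookup p v else 0)"
proof -
  have "Poly_Mapping.lookup (fa_mult (fa_mon [0]) p) w =
     (\<Sum>t\<in>Poly_Mapping.keys p. if 0#t = w then Poly_Mapping.lookup p t else 0)"
    unfolding fa_mult_def fa_mon_def lookup_sum by (simp add: lookup_single when_def)
  also have "\<dots> = (case w of [] \<Rightarrow> 0 | x#v \<Rightarrow> if x = 0 then Poly_Mapping.lookup p v else 0)"
    by (cases w) (simp_all add: keys_delta[of "\<lambda>x. x"] in_keys_iff)
  finally show ?thesis .
qed

lemma mon_nz: "(fa_mon s :: ('k::field) fa) \<noteq> 0"
  by (metis lookup_single_eq lookup_zero one_neq_zero fa_mon_def)

lemma keys_x0X: "Poly_Mapping.keys (x0X :: ('k::field) dpoly) = {1}"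
  using mon_nz[of "[0]"] by (simp add: x0X_def)


lemma lookup_dp: "Poly_Mapping.lookup (dp_mult (x0X :: ('k::field) dpoly) Q) i =
  (if i = 0 then 0 else fa_mult (fa_mon [0]) (Poly_Mapping.lookup Q (i-1)))
   + fa_mult (fa_mon [0]) (fa_D (Poly_Mapping.lookup Q i))"
proof -
  let ?K = "Poly_Mapping.keys Q"
  let ?l = "Poly_Mapping.lookup Q"
  have a: "{..(1::nat)} = {0,1}" by auto
  have l1: "Poly_Mapping.lookup (x0X :: ('k::field) dpoly) 1 = fa_mon [0]" by (simp add: x0X_def)
  have l1': "Poly_Mapping.lookup (x0X :: ('k::field) dpoly) (Suc 0) = fa_mon [0]" by (simp add: x0X_def)
  have s1: "\<And>g. sum g {1::nat} = g 1" by simp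
  have "Poly_Mapping.lookup (dp_mult (x0X :: ('k::field) dpoly) Q) i =
    (\<Sum>j\<in>?K. (if Suc j = i then fa_mult (fa_mon [0]) (?l j) else 0)
       + (if j = i then fa_mult (fa_mon [0]) (fa_D (?l j)) else 0))"
    unfolding dp_mult_def keys_x0X lookup_sum s1 a
    by (simp add: l1 l1' lookup_single when_def cong: if_cong)
  also have "\<dots> = (\<Sum>j\<in>?K. (if Suc j = i then fa_mult (fa_mon [0]) (?l j) else 0))
       + (\<Sum>j\<in>?K. (if j = i then fa_mult (fa_mon [0]) (fa_D (?l j)) else 0))"
    by (rule sum.distrib)
  also have "(\<Sum>j\<in>?K. (if Suc j = i then fa_mult (fa_mon [0]) (?l j) else 0)) =
     (if i = 0 then 0 else fa_mult (fa_mon [0]) (?l (i-1)))"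
  proof (cases i)
    case 0 then show ?thesis by simp
  next
    case (Suc i')
    then have "(\<Sum>j\<in>?K. (if Suc j = i then fa_mult (fa_mon [0]) (?l j) else 0)) =
       (\<Sum>j\<in>?K. (if j = i' then fa_mult (fa_mon [0]) (?l j) else 0))" by simp
    also have "\<dots> = fa_mult (fa_mon [0]) (?l i')" by (rule keys_delta) simp
    finally show ?thesis using Suc by simp
  qed
  also have "(\<Sum>j\<in>?K. (if j = i then fa_mult (fa_mon [0]) (fa_D (?l j)) else 0)) =
      fa_mult (fa_mon [0]) (fa_D (?l i))"
    by (rule keys_delta[of "\<lambda>x. fa_mult (fa_mon [0]) (fa_D x)"]) simp
  finally show ?thesis .
qed


definition cf :: "nat \<Rightarrow> nat \<Rightarrow> nat list \<Rightarrow> 'k::field" where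
  "cf n i w = (if length w = n \<and> sum_list w + i = n then of_nat (Gc 0 w) else 0)"

lemma x0X_pow_Suc: "1 \<le> n \<Longrightarrow> x0X_pow (Suc n) = dp_mult x0X (x0X_pow n)"
  unfolding x0X_pow_def by (cases n) auto

lemma sum_dec: "q < length v \<Longrightarrow> 0 < v!q \<Longrightarrow> sum_list (dec v q) = sum_list v - 1"
  unfolding dec_def by (simp add: sum_list_update)

lemma sum_ge: "q < length v \<Longrightarrow> v!q \<le> sum_list v" for v :: "nat list"
  by (induction v arbitrary: q) (auto simp: nth_Cons trans_le_add2 split: nat.splits)

lemma length_dec[simp]: "length (dec v q) = length v"
  by (simp add: dec_def)

lemma coeff_step:
  fixes v :: "nat list"
  shows "(if i = 0 then 0 else (cf n (i-1) v :: 'k::field)) +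
     (\<Sum>q<length v. if 0 < v!q then cf n i (dec v q) else 0) = cf (Suc n) i (0#v)"
proof (cases "length v = n \<and> sum_list v + i = Suc n")
  case True
  have g1: "Gc 0 (0#v) = Gc 0 v + DS 0 v" using Gc_step[of 0 v] by simp
  have ds: "(of_nat (DS 0 v) :: 'k) = (\<Sum>q<length v. if 0 < v!q then cf n i (dec v q) else 0)"
    unfolding DS_def of_nat_sum
  proof (intro sum.cong refl)
    fix q assume "q \<in> {..<length v}"
    then have q: "q < length v" by simp
    show "of_nat (if 0 < v!q then Gc 0 (dec v q) else 0) = (if 0 < v!q then cf n i (dec v q) else (0::'k))"
      using True q sum_dec[OF q] sum_ge[OF q] by (auto simp: cf_def)
  qed
  show ?thesis
  proof (cases "i = 0")
    case True2: True
    have "Gc 0 v = 0"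
    proof (rule ccontr)
      assume "Gc 0 v \<noteq> 0"
      from Gc_nonzero[OF this] True True2 show False by auto
    qed
    then show ?thesis using True True2 g1 ds by (simp add: cf_def)
  next
    case False
    then show ?thesis using True g1 ds by (simp add: cf_def)
  qed
next
  case False
  have "(\<Sum>q<length v. if 0 < v!q then (cf n i (dec v q) :: 'k) else 0) = 0"
  proof (intro sum.neutral ballI)
    fix q assume "q \<in> {..<length v}"
    then have q: "q < length v" by simp
    show "(if 0 < v!q then (cf n i (dec v q) :: 'k) else 0) = 0"
      using False q sum_dec[OF q] sum_ge[OF q] by (auto simp: cf_def)
  qed
  moreover have "(if i = 0 then 0 else (cf n (i-1) v :: 'k)) = 0"
    using False by (auto simp: cf_def)
  ultimately show ?thesis using False by (auto simp: cf_def)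
qed

lemma coeff_formula:
  assumes "1 \<le> n"
  shows "Poly_Mapping.lookup (Poly_Mapping.lookup (x0X_pow n) i) w = (cf n i w :: 'k::field)"
  using assms
proof (induction n arbitrary: i w rule: nat_induct_at_least)
  case base
  show ?case
  proof (cases "i = 1")
    case True
    then show ?thesis
      by (cases w) (auto simp: x0X_pow_def x0X_def fa_mon_def lookup_single when_def cf_def binomial_eq_0_iff)
  next
    case False
    have z: "(of_nat ((0::nat) choose a) :: 'k) = 0" if "a + i = Suc 0" for a using that False by (cases a) auto
    show ?thesis using False
      by (cases w) (auto simp: x0X_pow_def x0X_def fa_mon_def lookup_single when_def cf_def z)
  qed
next
  case (Suc n)
  have "Poly_Mapping.lookup (Poly_Mapping.lookup (x0X_pow (Suc n)) i) w =
     Poly_Mapping.lookup ((if i = 0 then 0 else fa_mult (fa_mon [0]) (Poly_Mapping.lookup (x0X_pow n) (i-1)))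
      + fa_mult (fa_mon [0]) (fa_D (Poly_Mapping.lookup (x0X_pow n) i))) w"
    by (simp only: x0X_pow_Suc[OF Suc.hyps] lookup_dp)
  also have "\<dots> = (cf (Suc n) i w :: 'k)"
  proof (cases w)
    case Nil
    then show ?thesis by (simp add: lookup_add lookup_x0mult cf_def)
  next
    case (Cons x v)
    show ?thesis
    proof (cases "x = 0")
      case True
      have S: "(\<Sum>q<length v. if 0 < v!q then Poly_Mapping.lookup (Poly_Mapping.lookup (x0X_pow n) i) (dec v q) else 0)
         = (\<Sum>q<length v. if 0 < v!q then (cf n i (dec v q) :: 'k) else 0)"
        by (intro sum.cong refl) (simp add: Suc.IH)
      have "Poly_Mapping.lookup ((if i = 0 then 0 else fa_mult (fa_mon [0]) (Poly_Mapping.lookup (x0X_pow n) (i-1)))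
      + fa_mult (fa_mon [0]) (fa_D (Poly_Mapping.lookup (x0X_pow n) i))) w =
        (if i = 0 then 0 else (cf n (i-1) v :: 'k)) +
     (\<Sum>q<length v. if 0 < v!q then cf n i (dec v q) else 0)"
        using Cons True S by (simp add: lookup_add lookup_x0mult lookup_D Suc.IH)
      also have "\<dots> = cf (Suc n) i (0#v)" by (rule coeff_step)
      finally show ?thesis using Cons True by simp
    next
      case False
      then show ?thesis using Cons by (simp add: lookup_add lookup_x0mult cf_def binomial_eq_0)
    qed
  qed
  finally show ?case .
qed


definition ent :: "nat \<Rightarrow> nat set \<Rightarrow> nat \<Rightarrow> nat" where
  "ent b S q = (if q mod 100 = 0 \<and> q div 100 \<in> S then b
     else if q mod 100 = 2 \<and> q div 100 \<notin> S then b else 0)"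

definition Wd :: "nat \<Rightarrow> nat \<Rightarrow> nat set \<Rightarrow> nat list" where
  "Wd b m S = map (ent b S) [0..<m]"

lemma sum_split_add: "(\<Sum>r<n + d. f r) = (\<Sum>r<n. f r) + (\<Sum>j<d. f (n + j))" for f :: "nat \<Rightarrow> nat"
  by (induction d) (simp_all add: add.assoc)

lemma prod_split_add: "(\<Prod>r<n + d. f r) = (\<Prod>r<n. f r) * (\<Prod>j<d. f (n + j))" for f :: "nat \<Rightarrow> nat"
  by (induction d) (simp_all add: mult.assoc)

lemma ent_block: "j < 100 \<Longrightarrow> ent b S (100 * k + j) =
   (if j = 0 \<and> k \<in> S then b else if j = 2 \<and> k \<notin> S then b else 0)"
  unfolding ent_def by simp

lemma sl: "sum_list (map f [0..<n]) = (\<Sum>r<n. f r)" for f :: "nat \<Rightarrow> nat"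
  by (simp add: interv_sum_list_conv_sum_set_nat atLeast0LessThan)

lemma e012: "ent b S (100 * k) = (if k \<in> S then b else 0)"
  "ent b S (Suc (100 * k)) = 0" "ent b S (Suc (Suc (100 * k))) = (if k \<in> S then 0 else b)"
  using ent_block[of 0 b S k] ent_block[of 1 b S k] ent_block[of 2 b S k] by simp_all

lemma sum_block: "(\<Sum>j<100. ent b S (100 * k + j)) = b"
proof -
  have "(\<Sum>j<100. ent b S (100 * k + j)) =
     (\<Sum>j<(100::nat). (if j = 0 then (if k \<in> S then b else 0) else 0) + (if j = 2 then (if k \<in> S then 0 else b) else 0))"
    by (intro sum.cong refl) (simp add: ent_block)
  also have "\<dots> = b" by (simp add: sum.distrib)
  finally show ?thesis .
qed

lemma sum_ent: "(\<Sum>r<100 * k. ent b S r) = b * k"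
proof (induction k)
  case 0 then show ?case by simp
next
  case (Suc k)
  have "(\<Sum>r<100 * Suc k. ent b S r) = (\<Sum>r<100 * k + 100. ent b S r)" by (simp add: add.commute)
  also have "\<dots> = b * k + b" unfolding sum_split_add Suc sum_block ..
  finally show ?case by simp
qed

lemma sum_ent2: "(\<Sum>r<100 * k + 2. ent b S r) = b * k + (if k \<in> S then b else 0)"
proof -
  have "(\<Sum>r<100 * k + 2. ent b S r) = b * k + (\<Sum>j<2. ent b S (100 * k + j))"
    unfolding sum_split_add sum_ent ..
  also have "(\<Sum>j<2. ent b S (100 * k + j)) = (if k \<in> S then b else 0)"
    by (simp add: numeral_2_eq_2 ent_block)
  finally show ?thesis .
qed

definition gq :: "nat \<Rightarrow> nat set \<Rightarrow> nat \<Rightarrow> nat" where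
  "gq b S q = (q - (\<Sum>r<q. ent b S r)) choose (ent b S q)"

definition Fk :: "nat \<Rightarrow> nat set \<Rightarrow> nat \<Rightarrow> nat" where
  "Fk b S k = (if k \<in> S then (100 * k - b * k) choose b else (100 * k + 2 - b * k) choose b)"

lemma prod_block: "(\<Prod>j<100. gq b S (100 * k + j)) = Fk b S k"
proof -
  have "(\<Prod>j<100. gq b S (100 * k + j)) = (\<Prod>j\<in>{0,2}. gq b S (100 * k + j))"
  proof (rule prod.mono_neutral_right)
    show "\<forall>i\<in>{..<100} - {0, 2}. gq b S (100 * k + i) = 1"
      by (auto simp: gq_def ent_block)
  qed auto
  also have "\<dots> = gq b S (100 * k) * gq b S (Suc (Suc (100 * k)))" by simp
  also have "\<dots> = Fk b S k"
  proof -
    have s0: "(\<Sum>r<100*k. ent b S r) = b*k" by (rule sum_ent)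
    have s2: "(\<Sum>r<Suc (Suc (100*k)). ent b S r) = b*k + (if k\<in>S then b else 0)"
      using sum_ent2[where k=k and b=b and S=S] by (simp add: numeral_2_eq_2)
    have g0: "gq b S (100 * k) = (100 * k - b * k) choose (if k \<in> S then b else 0)"
      unfolding gq_def s0 e012 ..
    have g2: "gq b S (Suc (Suc (100 * k))) = (Suc (Suc (100 * k)) - (b*k + (if k\<in>S then b else 0))) choose (if k \<in> S then 0 else b)"
      unfolding gq_def s2 e012 ..
    show ?thesis unfolding g0 g2 Fk_def by (cases "k \<in> S") simp_all
  qed
  finally show ?thesis .
qed

lemma prod_gq: "(\<Prod>q<100 * k. gq b S q) = (\<Prod>j<k. Fk b S j)"
proof (induction k)
  case 0 then show ?case by simp
next
  case (Suc k)
  have "(\<Prod>q<100 * Suc k. gq b S q) = (\<Prod>q<100 * k + 100. gq b S q)" by (simp add: add.commute)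
  also have "\<dots> = (\<Prod>j<k. Fk b S j) * Fk b S k" unfolding prod_split_add Suc prod_block ..
  finally show ?case by simp
qed

lemma Gc_Wd:
  assumes "0 < h"
  shows "Gc 0 (Wd b (100 * h - 1) S) = (\<Prod>j<h. Fk b S j)"
proof -
  let ?m = "100 * h - 1"
  have "Gc 0 (Wd b ?m S) = (\<Prod>q<?m. gq b S q)"
    unfolding Gc_prod
    by (intro prod.cong) (auto simp: Wd_def gq_def take_map sl min_def)
  also have "\<dots> = (\<Prod>q<?m. gq b S q) * gq b S ?m"
  proof -
    have e: "?m = 100*(h-1) + 99" using assms by simp
    have "?m mod 100 = 99" unfolding e by simp
    then have "gq b S ?m = 1" by (simp add: gq_def ent_def)
    then show ?thesis by simp
  qed
  also have "\<dots> = (\<Prod>q<100 * h. gq b S q)"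
  proof -
    have "100 * h = Suc ?m" using assms by simp
    then show ?thesis by (metis prod.lessThan_Suc)
  qed
  also have "\<dots> = (\<Prod>j<h. Fk b S j)" by (rule prod_gq)
  finally show ?thesis .
qed

lemma sum_Wd:
  assumes "0 < h"
  shows "sum_list (Wd b (100 * h - 1) S) = b * h"
proof -
  let ?m = "100 * h - 1"
  have "sum_list (Wd b ?m S) = (\<Sum>q<?m. ent b S q)"
    by (simp add: Wd_def sl)
  also have "\<dots> = (\<Sum>q<?m. ent b S q) + ent b S ?m"
  proof -
    have e: "?m = 100*(h-1) + 99" using assms by simp
    have "?m mod 100 = 99" unfolding e by simp
    then show ?thesis by (simp add: ent_def)
  qed
  also have "\<dots> = (\<Sum>q<100 * h. ent b S q)"
  proof -
    have "100 * h = Suc ?m" using assms by simp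
    then show ?thesis by (metis sum.lessThan_Suc)
  qed
  also have "\<dots> = b * h" by (rule sum_ent)
  finally show ?thesis .
qed

lemma length_Wd[simp]: "length (Wd b m S) = m"
  by (simp add: Wd_def)

lemma nth_Wd: "q < m \<Longrightarrow> Wd b m S ! q = ent b S q"
  by (simp add: Wd_def)


definition psi :: "nat \<Rightarrow> nat \<Rightarrow> nat list \<Rightarrow> 'k::field" where
  "psi b h w = (\<Sum>S\<in>Pow {..<h}. if w = Wd b (100 * h - 1) S then (-1) ^ card S else 0)"

definition sw :: "nat \<Rightarrow> nat list \<Rightarrow> nat list" where
  "sw k w = w[100 * k := w ! (100 * k + 2), 100 * k + 2 := w ! (100 * k)]"

definition flip :: "nat \<Rightarrow> nat set \<Rightarrow> nat set" where
  "flip k S = (if k \<in> S then S - {k} else insert k S)"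

lemma length_sw[simp]: "length (sw k w) = length w"
  by (simp add: sw_def)

lemma sw_invol: "100 * k + 2 < length w \<Longrightarrow> sw k (sw k w) = w"
  unfolding sw_def by (rule nth_equalityI) (auto simp: nth_list_update)

lemma sw_eq:
  assumes "length u1 = length u2" "100 * k + 2 < length u1"
    "u1 ! (100 * k) = u2 ! (100 * k + 2)" "u1 ! (100 * k + 2) = u2 ! (100 * k)"
    "\<And>q. q < length u1 \<Longrightarrow> q \<noteq> 100 * k \<Longrightarrow> q \<noteq> 100 * k + 2 \<Longrightarrow> u1 ! q = u2 ! q"
  shows "sw k u1 = u2"
  unfolding sw_def using assms by (intro nth_equalityI) (auto simp: nth_list_update)

lemma flip_flip: "flip k (flip k S) = S"
  by (auto simp: flip_def)

lemma flip_Pow: "k < h \<Longrightarrow> S \<in> Pow {..<h} \<Longrightarrow> flip k S \<in> Pow {..<h}"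
  by (auto simp: flip_def)

lemma flip_sub: "k < h \<Longrightarrow> S \<subseteq> {..<h} \<Longrightarrow> flip k S \<subseteq> {..<h}"
  by (auto simp: flip_def)

lemma sign_flip: "finite S \<Longrightarrow> ((-1::'k::field) ^ card (flip k S)) = - ((-1) ^ card S)"
proof (cases "k \<in> S")
  case True
  assume f: "finite S"
  then have "card S = Suc (card (S - {k}))" using True by (simp only: card_Suc_Diff1)
  then show ?thesis using True by (simp add: flip_def del: card_Diff_insert)
next
  case False
  assume f: "finite S"
  then show ?thesis using False by (simp add: flip_def)
qed

lemma ent_flip: "ent b (flip k S) q = (if q = 100 * k then ent b S (100 * k + 2)
    else if q = 100 * k + 2 then ent b S (100 * k) else ent b S q)"
proof (cases "q = 100 * k")
  case True then show ?thesis by (simp add: e012 flip_def)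
next
  case F1: False
  show ?thesis
  proof (cases "q = 100 * k + 2")
    case True then show ?thesis by (simp add: e012 flip_def)
  next
    case F2: False
    show ?thesis
    proof (cases "q div 100 = k")
      case True
      have "q = q div 100 * 100 + q mod 100" by simp
      then have qe: "q = 100 * k + q mod 100" using True by simp
      have "q mod 100 \<noteq> 0" "q mod 100 \<noteq> 2" using F1 F2 qe by auto
      then show ?thesis using F1 F2 by (simp add: ent_def)
    next
      case False
      have "(q div 100 \<in> flip k S) = (q div 100 \<in> S)" using False by (auto simp: flip_def)
      then show ?thesis using F1 F2 by (simp add: ent_def)
    qed
  qed
qed

lemma sw_Wd:
  assumes "100 * k + 2 < m"
  shows "sw k (Wd b m S) = Wd b m (flip k S)"
  by (rule sw_eq) (use assms in \<open>auto simp: nth_Wd ent_flip\<close>)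

lemma psi_len: "length w \<noteq> 100 * h - 1 \<Longrightarrow> psi b h w = 0"
  unfolding psi_def by (intro sum.neutral) auto

lemma psi_pair:
  assumes "100 * k + 2 < length u1" "sw k u1 = u2"
  shows "psi b h u1 + psi b h u2 = (0::'k::field)"
proof (cases "length u1 = 100 * h - 1")
  case False
  have "length u2 = length u1" using assms by auto
  then show ?thesis using False by (simp add: psi_len)
next
  case True
  let ?m = "100 * h - 1"
  have kh: "k < h" using assms True by simp
  have eq: "u2 = Wd b ?m (flip k S) \<longleftrightarrow> u1 = Wd b ?m S" for S
  proof
    assume "u2 = Wd b ?m (flip k S)"
    then have "sw k u2 = sw k (Wd b ?m (flip k S))" by simp
    then show "u1 = Wd b ?m S"
      using assms True sw_invol[of k u1] sw_Wd[of k ?m b "flip k S"] flip_flip by simp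
  next
    assume "u1 = Wd b ?m S"
    then show "u2 = Wd b ?m (flip k S)" using assms True sw_Wd[of k ?m b S] by simp
  qed
  have "psi b h u2 = (\<Sum>S\<in>Pow {..<h}. if u2 = Wd b ?m (flip k S) then (-1) ^ card (flip k S) else (0::'k))"
    unfolding psi_def
    by (rule sum.reindex_bij_witness[where i="flip k" and j="flip k"])
       (auto simp: flip_flip flip_sub[OF kh])
  also have "\<dots> = (\<Sum>S\<in>Pow {..<h}. - (if u1 = Wd b ?m S then (-1) ^ card S else (0::'k)))"
  proof (intro sum.cong refl)
    fix S assume "S \<in> Pow {..<h}"
    then have "finite S" using finite_subset by auto
    then have sf: "((-1::'k)^card (flip k S)) = - ((-1)^card S)" by (rule sign_flip)
    show "(if u2 = Wd b ?m (flip k S) then (-1) ^ card (flip k S) else (0::'k)) =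
       - (if u1 = Wd b ?m S then (-1) ^ card S else 0)" using eq[of S] sf by simp
  qed
  also have "\<dots> = - psi b h u1" unfolding psi_def by (simp add: sum_negf)
  finally show ?thesis by simp
qed

lemma psi_type1:
  assumes "0 < b" "length a = 100 * k" "length s = 99" "s ! 0 = s ! 2"
  shows "psi b h (a @ s @ t) = (0::'k::field)"
proof (cases "length (a @ s @ t) = 100 * h - 1")
  case False
  then show ?thesis by (rule psi_len)
next
  case True
  let ?m = "100 * h - 1"
  have lt: "100 * k + 2 < ?m" using True assms by simp
  have "a @ s @ t \<noteq> Wd b ?m S" for S
  proof
    assume e: "a @ s @ t = Wd b ?m S"
    have "(a @ s @ t) ! (100 * k) = (a @ s @ t) ! (100 * k + 2)"
      using assms by (simp add: nth_append)
    then have "ent b S (100 * k) = ent b S (Suc (Suc (100 * k)))"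
      using lt by (simp add: e nth_Wd)
    then show False using assms(1) by (cases "k \<in> S") (simp_all add: e012)
  qed
  then show ?thesis unfolding psi_def by (intro sum.neutral) auto
qed

lemma psi_type2:
  assumes "length a = 100 * k" "length s1 = 99" "length s2 = 99"
    "s1 ! 0 = l1" "s1 ! 2 = l2" "s2 ! 0 = l2" "s2 ! 2 = l1"
    "\<forall>q<99. q \<noteq> 0 \<and> q \<noteq> 2 \<longrightarrow> s1 ! q = s2 ! q"
  shows "psi b h (a @ s1 @ t) + psi b h (a @ s2 @ t) = (0::'k::field)"
proof (rule psi_pair)
  show "100 * k + 2 < length (a @ s1 @ t)" using assms by simp
  show "sw k (a @ s1 @ t) = a @ s2 @ t"
  proof (rule sw_eq)
    fix q assume q: "q < length (a @ s1 @ t)" "q \<noteq> 100 * k" "q \<noteq> 100 * k + 2"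
    show "(a @ s1 @ t) ! q = (a @ s2 @ t) ! q"
    proof (cases "q < 100 * k")
      case True then show ?thesis using assms by (simp add: nth_append)
    next
      case False
      show ?thesis
      proof (cases "q < 100 * k + 99")
        case True
        then have lt: "q - 100 * k < 99" using False by simp
        then have "s1 ! (q - 100 * k) = s2 ! (q - 100 * k)" using assms(8) False q by auto
        then show ?thesis using assms False True lt by (simp add: nth_append)
      next
        case False2: False
        then have "\<not> q - 100 * k < 99" by simp
        then show ?thesis using assms False False2 by (simp add: nth_append)
      qed
    qed
  qed (use assms in \<open>auto simp: nth_append\<close>)
qed

lemma Phi_gen:
  assumes "0 < b" "u \<in> fa_hom (100 * n)" "z \<in> Z1"
  shows "Phi (psi b h) (fa_mult (fa_mult u z) v) = (0::'k::field)"
proof -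
  have "Phi (psi b h) (fa_mult (fa_mult u z) v) =
     Phi (\<lambda>a. Phi (\<lambda>s. Phi (\<lambda>t. psi b h ((a @ s) @ t)) v) z) u"
    by (simp add: Phi_mult)
  also have "\<dots> = 0"
  proof (rule Phi_vanish)
    fix a assume "a \<in> Poly_Mapping.keys u"
    then have la: "length a = 100 * n" using assms(2) by (auto simp: fa_hom_def)
    show "Phi (\<lambda>s. Phi (\<lambda>t. psi b h ((a @ s) @ t)) v) z = 0"
      using assms(3) unfolding Z1_def
    proof (elim UnE CollectE exE conjE)
      fix \<kappa> s p q
      assume z: "z = fa_smult \<kappa> (fa_mon s)" and ls: "length s = 99" and pq: "p < q" "q \<le> 1"
        and e: "s ! (3 ^ p - 1) = s ! (3 ^ q - 1)"
      have "p = 0" "q = 1" using pq by auto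
      then have e2: "s ! 0 = s ! 2" using e by simp
      have "Phi (\<lambda>t. psi b h ((a @ s) @ t)) v = 0"
        by (rule Phi_vanish) (simp add: psi_type1[OF assms(1) la ls e2])
      then show ?thesis by (simp add: z Phi_smult Phi_mon)
    next
      fix \<kappa> s1 s2 l1 l2
      assume z: "z = fa_smult \<kappa> (fa_mon s1 + fa_mon s2)" and l: "length s1 = 99" "length s2 = 99"
        and c: "s1 ! 0 = l1" "s1 ! 2 = l2" "s2 ! 0 = l2" "s2 ! 2 = l1"
        "\<forall>q<99. q \<noteq> 0 \<and> q \<noteq> 2 \<longrightarrow> s1 ! q = s2 ! q"
      have "Phi (\<lambda>t. psi b h ((a @ s1) @ t)) v + Phi (\<lambda>t. psi b h ((a @ s2) @ t)) v
         = Phi (\<lambda>t. psi b h ((a @ s1) @ t) + psi b h ((a @ s2) @ t)) v"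
        by (simp add: Phi_fun_add)
      also have "\<dots> = 0"
        by (rule Phi_vanish) (simp add: psi_type2[OF la l c])
      finally show ?thesis by (simp add: z Phi_smult Phi_mon Phi_add)
    qed
  qed
  finally show ?thesis .
qed

lemma Phi_B1:
  assumes "0 < b" "p \<in> B1"
  shows "Phi (psi b h) p = (0::'k::field)"
  using assms(2) unfolding B1_def
proof (induction rule: fa_span.induct)
  case span_zero then show ?case by simp
next
  case (span_base a)
  then show ?case using Phi_gen[OF assms(1)] by blast
next
  case (span_add a c) then show ?case by (simp add: Phi_add)
next
  case (span_smult a c) then show ?case by (simp add: Phi_smult)
qed


lemma Phi_psi: "Phi (psi b h) p =
   (\<Sum>S\<in>Pow {..<h}. (-1) ^ card S * Poly_Mapping.lookup p (Wd b (100 * h - 1) S) :: 'k::field)"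
proof -
  let ?K = "Poly_Mapping.keys p"
  let ?l = "Poly_Mapping.lookup p"
  let ?W = "\<lambda>S. Wd b (100 * h - 1) S"
  have "Phi (psi b h) p = (\<Sum>s\<in>?K. \<Sum>S\<in>Pow {..<h}. if s = ?W S then ?l s * (-1) ^ card S else (0::'k))"
    unfolding Phi_def psi_def sum_distrib_left
    by (intro sum.cong refl) simp
  also have "\<dots> = (\<Sum>S\<in>Pow {..<h}. \<Sum>s\<in>?K. if s = ?W S then ?l s * (-1) ^ card S else (0::'k))"
    by (rule sum.swap)
  also have "\<dots> = (\<Sum>S\<in>Pow {..<h}. (-1) ^ card S * ?l (?W S))"
  proof (intro sum.cong refl)
    fix S
    show "(\<Sum>s\<in>?K. if s = ?W S then ?l s * (-1) ^ card S else (0::'k)) = (-1) ^ card S * ?l (?W S)"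
      using keys_delta[where f="\<lambda>x. x * (-1::'k) ^ card S" and p=p and a="?W S"] by (simp add: mult.commute)
  qed
  finally show ?thesis .
qed

definition Ak :: "nat \<Rightarrow> nat \<Rightarrow> nat" where "Ak b k = (100 * k - b * k) choose b"
definition Bk :: "nat \<Rightarrow> nat \<Rightarrow> nat" where "Bk b k = (100 * k + 2 - b * k) choose b"

lemma value_formula:
  assumes h: "0 < h" and bh: "b * h \<le> 100 * h - 1"
  shows "Phi (psi b h) (x0X_coeff (100 * h - 1) (100 * h - 1 - b * h)) =
     (\<Prod>j<h. (- of_nat (Ak b j) + of_nat (Bk b j)) :: 'k::field)"
proof -
  let ?m = "100 * h - 1"
  let ?i = "?m - b * h"
  let ?H = "{..<h}"
  have m1: "1 \<le> ?m" using h by simp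
  have "Phi (psi b h) (x0X_coeff ?m ?i) =
     (\<Sum>S\<in>Pow ?H. (-1) ^ card S * (\<Prod>j<h. of_nat (Fk b S j)) :: 'k)"
    unfolding Phi_psi
  proof (intro sum.cong refl)
    fix S
    have "Poly_Mapping.lookup (x0X_coeff ?m ?i) (Wd b ?m S) = (cf ?m ?i (Wd b ?m S) :: 'k)"
      unfolding x0X_coeff_def by (rule coeff_formula[OF m1])
    also have "\<dots> = of_nat (\<Prod>j<h. Fk b S j)"
      using sum_Wd[OF h, of b S] Gc_Wd[OF h, of b S] bh by (simp add: cf_def)
    finally show "(-1) ^ card S * Poly_Mapping.lookup (x0X_coeff ?m ?i) (Wd b ?m S) =
        (-1) ^ card S * (\<Prod>j<h. of_nat (Fk b S j) :: 'k)" by simp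
  qed
  also have "\<dots> = (\<Sum>S\<in>Pow ?H. (\<Prod>j\<in>S. - of_nat (Ak b j)) * (\<Prod>j\<in>?H - S. of_nat (Bk b j)) :: 'k)"
  proof (intro sum.cong refl)
    fix S assume S: "S \<in> Pow ?H"
    have "(\<Prod>j<h. of_nat (Fk b S j) :: 'k) = (\<Prod>j<h. if j \<in> S then of_nat (Ak b j) else of_nat (Bk b j))"
      by (intro prod.cong refl) (simp add: Fk_def Ak_def Bk_def)
    also have "\<dots> = (\<Prod>j\<in>S. of_nat (Ak b j)) * (\<Prod>j\<in>?H - S. of_nat (Bk b j))"
    proof -
      have "?H \<inter> {x. x \<in> S} = S" "?H \<inter> - {x. x \<in> S} = ?H - S" using S by auto
      then show ?thesis by (simp add: prod.If_cases)
    qed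
    finally have e: "(\<Prod>j<h. of_nat (Fk b S j) :: 'k) = (\<Prod>j\<in>S. of_nat (Ak b j)) * (\<Prod>j\<in>?H - S. of_nat (Bk b j))" .
    have "(\<Prod>j\<in>S. - of_nat (Ak b j) :: 'k) = (-1) ^ card S * (\<Prod>j\<in>S. of_nat (Ak b j))"
    proof -
      have "(\<Prod>j\<in>S. - of_nat (Ak b j) :: 'k) = (\<Prod>j\<in>S. (-1) * of_nat (Ak b j))" by simp
      also have "\<dots> = (\<Prod>j\<in>S. (-1::'k)) * (\<Prod>j\<in>S. of_nat (Ak b j))" by (rule prod.distrib)
      finally show ?thesis by simp
    qed
    then show "(-1) ^ card S * (\<Prod>j<h. of_nat (Fk b S j) :: 'k) =
       (\<Prod>j\<in>S. - of_nat (Ak b j)) * (\<Prod>j\<in>?H - S. of_nat (Bk b j))"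
      unfolding e by (simp add: mult.assoc)
  qed
  also have "\<dots> = (\<Prod>j\<in>?H. (- of_nat (Ak b j) + of_nat (Bk b j)) :: 'k)"
    by (rule prod_add[symmetric]) simp
  finally show ?thesis by simp
qed

lemma ch2: "Suc (Suc n) choose 2 = (n choose 2) + 2 * n + 1"
  by (simp add: numeral_2_eq_2)

lemma factor1: "(- of_nat (Ak 1 j) + of_nat (Bk 1 j) :: 'k::field) = 2"
proof -
  have "100 * j + 2 - j = (100 * j - j) + 2" by simp
  then show ?thesis by (simp add: Ak_def Bk_def)
qed

lemma factor2:
  assumes "(2::'k::field) = 0"
  shows "(- of_nat (Ak 2 j) + of_nat (Bk 2 j) :: 'k) = 1"
proof -
  let ?n = "100 * j - 2 * j"
  have "100 * j + 2 - 2 * j = Suc (Suc ?n)" by simp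
  then have "Bk 2 j = Ak 2 j + 2 * ?n + 1" by (simp add: Ak_def Bk_def ch2)
  then have "(of_nat (Bk 2 j) :: 'k) = of_nat (Ak 2 j) + 2 * of_nat ?n + 1" by simp
  then show ?thesis using assms by simp
qed


lemma nonmember:
  assumes h: "0 < h"
  shows "\<exists>i0. 4 * i0 > 3 * (100 * h - 1 + 1) \<and> i0 \<le> 100 * h - 1 \<and>
     (x0X_coeff (100 * h - 1) i0 :: ('k::field) fa) \<notin> B1"
proof -
  let ?m = "100 * h - 1"
  obtain b :: nat where b: "b = (if (2::'k) = 0 then 2 else 1)" by simp
  have b12: "b = 1 \<or> b = 2" "0 < b" "b \<le> 2" using b by auto
  have b2h: "b * h \<le> 2 * h" using b12(3) by (rule mult_le_mono1)
  have bh: "b * h \<le> ?m"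
  proof -
    obtain c where c: "c = b * h" by simp
    have "c \<le> 100 * h - 1" using b2h h unfolding c[symmetric] by linarith
    then show ?thesis using c by simp
  qed
  let ?i = "?m - b * h"
  have val: "Phi (psi b h) (x0X_coeff ?m ?i) \<noteq> (0::'k)"
  proof -
    have "Phi (psi b h) (x0X_coeff ?m ?i) = (\<Prod>j<h. (- of_nat (Ak b j) + of_nat (Bk b j)) :: 'k)"
      by (rule value_formula[OF h bh])
    also have "\<dots> \<noteq> 0"
    proof (cases "(2::'k) = 0")
      case True
      then have "b = 2" using b by simp
      have f: "\<And>j. (- of_nat (Ak 2 j) + of_nat (Bk 2 j) :: 'k) = 1" using True by (rule factor2)
      show ?thesis unfolding \<open>b = 2\<close> f by simp
    next
      case False
      then have "b = 1" using b by simp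
      have f: "\<And>j. (- of_nat (Ak 1 j) + of_nat (Bk 1 j) :: 'k) = 2" by (rule factor1)
      show ?thesis unfolding \<open>b = 1\<close> f using False by simp
    qed
    finally show ?thesis .
  qed
  have nm: "(x0X_coeff ?m ?i :: 'k fa) \<notin> B1"
  proof
    assume "(x0X_coeff ?m ?i :: 'k fa) \<in> B1"
    then have "Phi (psi b h) (x0X_coeff ?m ?i) = (0::'k)" by (rule Phi_B1[OF b12(2)])
    with val show False by simp
  qed
  have ineq: "4 * ?i > 3 * (?m + 1)"
  proof -
    obtain c where c: "c = b * h" by simp
    have cle: "c \<le> 2 * h" using b2h c by simp
    obtain d where d: "d = 100 * h - 1 - c" by simp
    have dc: "d + c + 1 = 100 * h" using d cle h by simp
    have "4 * d > 3 * (100 * h)" using dc cle h by linarith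
    then show ?thesis using c d h by simp
  qed
  have le: "?i \<le> ?m" by simp
  show ?thesis using ineq le nm by blast
qed

theorem mainTheorem6:
  fixes h :: nat
  assumes "0 < h"
  shows "let m = 100 * h - 1 in
    \<exists>i. 4 * i > 3 * (m + 1) \<and> i \<le> m \<and>
        (x0X_coeff m i :: ('k::field) fa) \<notin> B1 \<and>
        (\<forall>j. i < j \<and> j \<le> m \<longrightarrow> (x0X_coeff m j :: 'k fa) \<in> B1)"
proof -
  let ?m = "100 * h - 1"
  obtain i0 where i0: "4 * i0 > 3 * (?m + 1)" "i0 \<le> ?m" "(x0X_coeff ?m i0 :: 'k fa) \<notin> B1"
    using nonmember[OF assms] by blast
  define J where "J = {j. j \<le> ?m \<and> (x0X_coeff ?m j :: 'k fa) \<notin> B1}"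
  have sub: "J \<subseteq> {..?m}" unfolding J_def by auto
  have fin: "finite J" by (rule finite_subset[OF sub]) simp
  have inJ: "i0 \<in> J" unfolding J_def using i0 by simp
  define i where "i = Max J"
  have ne: "J \<noteq> {}" using inJ by blast
  have iJ: "i \<in> J" unfolding i_def by (rule Max_in[OF fin ne])
  have i0i: "i0 \<le> i" unfolding i_def by (rule Max_ge[OF fin inJ])
  have P1: "4 * i > 3 * (?m + 1)" using i0(1) i0i by linarith
  have P2: "i \<le> ?m" using iJ unfolding J_def by simp
  have P3: "(x0X_coeff ?m i :: 'k fa) \<notin> B1" using iJ unfolding J_def by simp
  have P4: "\<forall>j. i < j \<and> j \<le> ?m \<longrightarrow> (x0X_coeff ?m j :: 'k fa) \<in> B1"
  proof (intro allI impI)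
    fix j assume j: "i < j \<and> j \<le> ?m"
    show "(x0X_coeff ?m j :: 'k fa) \<in> B1"
    proof (rule ccontr)
      assume "(x0X_coeff ?m j :: 'k fa) \<notin> B1"
      then have "j \<in> J" using j unfolding J_def by simp
      then have "j \<le> i" unfolding i_def by (rule Max_ge[OF fin])
      then show False using j by simp
    qed
  qed
  show ?thesis unfolding Let_def using P1 P2 P3 P4 by blast
qed


end
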